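(* Fix a formula $A$. For all annotated unary contexts $\Gamma\{-\}$, $\Delta\{-\}$ and every finite set of formulas $\Sigma$: if $\vdash^A \Gamma\{\Delta\{\Diamond A^\perp_\Sigma\}\}$, then $\vdash^A \Gamma\{\Delta\{\},\Diamond A^\perp_\Sigma\}$.
   Context: Formulas: over a countable set of atoms $\alpha$ with duals $\alpha^\perp$, $A,B ::= \alpha \mid \alpha^\perp \mid A\land B \mid A\lor B \mid \Box A \mid \Diamond A$; negation $A^\perp$ by De Morgan duality ($(\alpha)^\perp=\alpha^\perp$, $(\alpha^\perp)^\perp=\alpha$, $\land/\lor$ dual, $(\Box A)^\perp=\Diamond A^\perp$, $(\Diamond A)^\perp=\Box A^\perp$). Annotated sequents: $\Gamma,\Delta ::= \cdot \mid \Gamma, C \mid \Gamma, \Diamond A_\Sigma \mid \Gamma,[\Delta]_B$, where $C$ is a formula not of the form $\Diamond A$, $\Sigma$ is a finite set of formulas (annotation set) and $B$ a formula (bracket annotation); sequents are taken up to exchange. Annotated unary contexts $\Gamma\{-\}$ (one hole) are defined analogously, $\Gamma\{\Delta\}$ is hole-filling, $\Gamma\{\}=\Gamma\{\cdot\}$. Annotated rules (whenever an active formula in a premise is a $\Diamond$-formula, its annotation is simply discarded): (id) $\Gamma\{\alpha^\perp,\alpha\}$, provided every $\Diamond$-formula occurrence in it has annotation $\emptyset$; ($\land$) from $\Gamma_1\{A\}$ and $\Gamma_2\{B\}$ infer $\Gamma\{A\land B\}$; ($\lor$) from $\Gamma\{A,B\}$ infer $\Gamma\{A\lor B\}$; ($\Box$)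 from $\Gamma\{[\Diamond A^\perp_\Sigma, A]_A\}$ infer $\Gamma\{\Box A\}$; ($\Diamond$) from $\Gamma\{\Delta\{[\Delta',A]_B\},\Diamond A_\Sigma\}$ infer $\Gamma\{\Delta\{[\Delta']_B\},\Diamond A_{\Sigma\cup\{B\}}\}$ (for any unary context $\Delta\{-\}$, possibly of depth $0$); (cut) from $\Gamma_1\{A\}$ and $\Gamma_2\{A^\perp\}$ infer $\Gamma\{\}$. In the two-premise rules, $\Gamma_1\{-\},\Gamma_2\{-\},\Gamma\{-\}$ are identical except for annotation sets of $\Diamond$-formula occurrences (bracket annotations coincide), and each $\Diamond$-formula occurrence in $\Gamma\{-\}$ has as annotation the union of the annotations of the corresponding occurrences in $\Gamma_1,\Gamma_2$. Fix a formula $A$; $\vdash^A\Gamma$ means the annotated sequent $\Gamma$ is derivable with the annotated rules (id), ($\land$), ($\lor$), ($\Box$), ($\Diamond$) together with those instances of (cut) whose cut formula is $A$ (premises $\Gamma_1\{A\}$, $\Gamma_2\{A^\perp\}$). Convention: annotations not displayed in a statement (on $\Diamond$-formulas or brackets of contexts) are arbitrary; bracket annotations are the same in hypothesis and conclusion, while undisplayed $\Diamond$-annotations in the conclusion are existentially quantified. *)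

theory Defs
  imports Main "HOL-Library.Multiset" "HOL-Library.FSet"
begin

datatype fm = At nat | NAt nat | And fm fm | Or fm fm | Box fm | Dia fm

primrec neg :: "fm \<Rightarrow> fm" where
  "neg (At a) = NAt a"
| "neg (NAt a) = At a"
| "neg (And A B) = Or (neg A) (neg B)"
| "neg (Or A B) = And (neg A) (neg B)"
| "neg (Box A) = Dia (neg A)"
| "neg (Dia A) = Box (neg A)"

text \<open>F C is a formula not of the form Dia _,
 D A S is Dia A with annotation S, Br M B is the bracket [M]_B.
 Sequents are multisets of items (exchange).\<close>

datatype 'a item = F fm | D fm 'a | Br "'a item multiset" fm

type_synonym aitem = "fm fset item"
type_synonym aseq = "aitem multiset"

text \<open>Unary context: Hole M is the context M, {-};  InBr M c B is M, [c]_B.\<close>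
datatype 'a ctx = Hole "'a item multiset" | InBr "'a item multiset" "'a ctx" fm

type_synonym actx = "fm fset ctx"

primrec fill :: "'a ctx \<Rightarrow> 'a item multiset \<Rightarrow> 'a item multiset" where
  "fill (Hole M) N = M + N"
| "fill (InBr M c B) N = add_mset (Br (fill c N) B) M"

inductive wf_item :: "'a item \<Rightarrow> bool" where
  "(\<And>A. C \<noteq> Dia A) \<Longrightarrow> wf_item (F C)"
| "wf_item (D A S)"
| "(\<forall>x\<in>#M. wf_item x) \<Longrightarrow> wf_item (Br M B)"

definition wf_seq :: "'a item multiset \<Rightarrow> bool" where
  "wf_seq M = (\<forall>x\<in>#M. wf_item x)"

primrec wf_ctx :: "'a ctx \<Rightarrow> bool" where
  "wf_ctx (Hole M) = wf_seq M"
| "wf_ctx (InBr M c B) = (wf_seq M \<and> wf_ctx c)"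

definition fmi :: "fm \<Rightarrow> fm fset \<Rightarrow> aitem" where
  "fmi A S = (case A of Dia B \<Rightarrow> D B S | _ \<Rightarrow> F A)"

definition erase_seq :: "aseq \<Rightarrow> aseq" where
  "erase_seq M = image_mset (map_item (\<lambda>_. {||})) M"

definition erase_ctx :: "actx \<Rightarrow> actx" where
  "erase_ctx c = map_ctx (\<lambda>_. {||}) c"

text \<open>Merging for two-premise rules: identical except Dia-annotations; the result
 carries the union of the annotations.\<close>
inductive mi :: "aitem \<Rightarrow> aitem \<Rightarrow> aitem \<Rightarrow> bool"
  and msm :: "aseq \<Rightarrow> aseq \<Rightarrow> aseq \<Rightarrow> bool" where
  "mi (F C) (F C) (F C)"
| "mi (D A S1) (D A S2) (D A (S1 |\<union>| S2))"
| "msm M1 M2 M \<Longrightarrow> mi (Br M1 B) (Br M2 B) (Br M B)"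
| "msm {#} {#} {#}"
| "mi a b c \<Longrightarrow> msm M1 M2 M \<Longrightarrow> msm (add_mset a M1) (add_mset b M2) (add_mset c M)"

inductive mctx :: "actx \<Rightarrow> actx \<Rightarrow> actx \<Rightarrow> bool" where
  "msm M1 M2 M \<Longrightarrow> mctx (Hole M1) (Hole M2) (Hole M)"
| "msm M1 M2 M \<Longrightarrow> mctx c1 c2 c \<Longrightarrow> mctx (InBr M1 c1 B) (InBr M2 c2 B) (InBr M c B)"

inductive derivable :: "fm \<Rightarrow> aseq \<Rightarrow> bool" where
  ax: "wf_seq (fill G {#F (NAt a), F (At a)#}) \<Longrightarrow>
       erase_seq (fill G {#F (NAt a), F (At a)#}) = fill G {#F (NAt a), F (At a)#} \<Longrightarrow>
       derivable Ac (fill G {#F (NAt a), F (At a)#})"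
| conj: "derivable Ac (fill G1 {#fmi A S1#}) \<Longrightarrow> derivable Ac (fill G2 {#fmi B S2#}) \<Longrightarrow>
       mctx G1 G2 G \<Longrightarrow> derivable Ac (fill G {#F (And A B)#})"
| disj: "derivable Ac (fill G {#fmi A S1, fmi B S2#}) \<Longrightarrow> derivable Ac (fill G {#F (Or A B)#})"
| box: "derivable Ac (fill G {#Br {#D (neg A) S, fmi A S'#} A#}) \<Longrightarrow>
       derivable Ac (fill G {#F (Box A)#})"
| dia: "derivable Ac (fill G (add_mset (D A S) (fill Dl {#Br (add_mset (fmi A S') Dp) B#}))) \<Longrightarrow>
       derivable Ac (fill G (add_mset (D A (finsert B S)) (fill Dl {#Br Dp B#})))"
| cut: "derivable Ac (fill G1 {#fmi Ac S1#}) \<Longrightarrow> derivable Ac (fill G2 {#fmi (neg Ac) S2#}) \<Longrightarrow>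
       mctx G1 G2 G \<Longrightarrow> derivable Ac (fill G {#})"

end

theory Submission
  imports Defs
begin

inductive mv :: "aseq \<Rightarrow> aseq \<Rightarrow> bool" where
  top: "mv (add_mset (Br (add_mset (D a s) M) B) N) (add_mset (D a s) (add_mset (Br M B) N))"
| deep: "mv M M' \<Longrightarrow> mv (add_mset (Br M B) N) (add_mset (Br M' B) N)"

fun addtop :: "aitem \<Rightarrow> actx \<Rightarrow> actx" where
  "addtop x (Hole K) = Hole (add_mset x K)"
| "addtop x (InBr K c B) = InBr (add_mset x K) c B"

fun addms :: "aseq \<Rightarrow> actx \<Rightarrow> actx" where
  "addms M (Hole K) = Hole (M + K)"
| "addms M (InBr K c B) = InBr (M + K) c B"

fun cat :: "actx \<Rightarrow> actx \<Rightarrow> actx" where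
  "cat (Hole M) c = addms M c"
| "cat (InBr M g B) c = InBr M (cat g c) B"

lemma top': "mv (add_mset (Br (add_mset (D a s) M) B) N) (add_mset (Br M B) (add_mset (D a s) N))"
  by (metis mv.top add_mset_commute)

lemma fill_addtop[simp]: "fill (addtop x c) Q = add_mset x (fill c Q)"
  by (cases c) auto
lemma fill_addms[simp]: "fill (addms M c) Q = M + fill c Q"
  by (cases c) auto
lemma fill_cat[simp]: "fill (cat g c) Q = fill g (fill c Q)"
  by (induction g) auto

inductive mvc :: "actx \<Rightarrow> actx \<Rightarrow> bool" where
  hole: "mv M M' \<Longrightarrow> mvc (Hole M) (Hole M')"
| side: "mv M M' \<Longrightarrow> mvc (InBr M c B) (InBr M' c B)"
| dp: "mvc c c' \<Longrightarrow> mvc (InBr M c B) (InBr M c' B)"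
| out: "mvc (InBr M (addtop (D a s) c) B) (InBr (add_mset (D a s) M) c B)"

lemma mv_add: "mv M M' \<Longrightarrow> mv (M + N) (M' + N)"
proof (induction rule: mv.induct)
  case (top a s M B N0)
  then show ?case using mv.top[of a s M B "N0+N"] by simp
next
  case (deep M M' B N0)
  then show ?case using mv.deep[of M M' B "N0+N"] by simp
qed

lemma mv_add2: "mv M M' \<Longrightarrow> mv (N + M) (N + M')"
  using mv_add by (metis add.commute)

lemma mv_addm: "mv M M' \<Longrightarrow> mv (add_mset x M) (add_mset x M')"
  using mv_add2[of M M' "{#x#}"] by simp

lemma mv_fill_cong: "mv Z Z' \<Longrightarrow> mv (fill G Z) (fill G Z')"
  by (induction G) (auto intro: mv_add2 mv.deep)

lemma mvc_fill: "mvc G G' \<Longrightarrow> mv (fill G Q) (fill G' Q)"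
proof (induction rule: mvc.induct)
  case (hole M M') then show ?case by (simp add: mv_add)
next
  case (side M M' c B) then show ?case using mv_addm by (simp add: mv_addm)
next
  case (dp c c' M B) then show ?case by (simp add: mv.deep)
next
  case (out M a s c B) then show ?case using mv.top[of a s "fill c Q" B M] top'[of a s "fill c Q" B M] by simp
qed

lemma add_eq_sum: "add_mset b N = M + P \<Longrightarrow> (\<exists>M0. M = add_mset b M0 \<and> N = M0 + P) \<or> (\<exists>P0. P = add_mset b P0 \<and> N = M + P0)"
proof -
  assume h: "add_mset b N = M + P"
  hence "b \<in># M \<or> b \<in># P" by (metis union_single_eq_member union_iff)
  then show ?thesis
  proof
    assume "b \<in># M"
    then obtain M0 where "M = add_mset b M0" by (metis multi_member_split)
    with h show ?thesis by auto
  next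
    assume "b \<in># P"
    then obtain P0 where "P = add_mset b P0" by (metis multi_member_split)
    with h show ?thesis by auto
  qed
qed

lemma mv_sum: assumes h: "mv (M + P) Y" shows "(\<exists>M'. mv M M' \<and> Y = M' + P) \<or> (\<exists>P'. mv P P' \<and> Y = M + P')"
  using h proof (cases rule: mv.cases)
  case (top a s K B N)
  from add_eq_sum[OF top(1)[symmetric]] show ?thesis
  proof
    assume "\<exists>M0. M = add_mset (Br (add_mset (D a s) K) B) M0 \<and> N = M0 + P"
    then obtain M0 where "M = add_mset (Br (add_mset (D a s) K) B) M0" "N = M0 + P" by blast
    with top show ?thesis using mv.top[of a s K B M0] top'[of a s K B M0] by auto
  next
    assume "\<exists>P0. P = add_mset (Br (add_mset (D a s) K) B) P0 \<and> N = M + P0"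
    then obtain P0 where "P = add_mset (Br (add_mset (D a s) K) B) P0" "N = M + P0" by blast
    with top show ?thesis using mv.top[of a s K B P0] top'[of a s K B P0] by auto
  qed
next
  case (deep K K' B N)
  from add_eq_sum[OF deep(1)[symmetric]] show ?thesis
  proof
    assume "\<exists>M0. M = add_mset (Br K B) M0 \<and> N = M0 + P"
    then obtain M0 where "M = add_mset (Br K B) M0" "N = M0 + P" by blast
    with deep show ?thesis using mv.deep[of K K' B M0] by auto
  next
    assume "\<exists>P0. P = add_mset (Br K B) P0 \<and> N = M + P0"
    then obtain P0 where "P = add_mset (Br K B) P0" "N = M + P0" by blast
    with deep show ?thesis using mv.deep[of K K' B P0] by auto
  qed
qed

lemma mv_hasBr: "mv X Y \<Longrightarrow> \<exists>M B. Br M B \<in># X"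
  by (induction rule: mv.induct) auto

lemma mv_single: assumes "mv {#Br Z B#} W" shows "(\<exists>a s Z0. Z = add_mset (D a s) Z0 \<and> W = {#D a s, Br Z0 B#}) \<or> (\<exists>Z'. mv Z Z' \<and> W = {#Br Z' B#})"
  using assms by (cases rule: mv.cases) auto

lemma mv_Br: "mv (add_mset (Br Z B) M) Y \<Longrightarrow> (\<exists>M'. mv M M' \<and> Y = add_mset (Br Z B) M') \<or> (\<exists>Z'. mv Z Z' \<and> Y = add_mset (Br Z' B) M) \<or> (\<exists>a s Z0. Z = add_mset (D a s) Z0 \<and> Y = add_mset (D a s) (add_mset (Br Z0 B) M))"
  using mv_sum[of "{#Br Z B#}" M Y] mv_single[of Z B] by fastforce

lemma fill_top: "add_mset (D a s) Z0 = fill c P \<Longrightarrow> (\<exists>c0. c = addtop (D a s) c0 \<and> Z0 = fill c0 P) \<or> (\<exists>K P0. c = Hole K \<and> P = add_mset (D a s) P0 \<and> Z0 = K + P0)"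
proof (cases c)
  case (Hole K)
  assume h: "add_mset (D a s) Z0 = fill c P"
  with Hole have "add_mset (D a s) Z0 = K + P" by simp
  from add_eq_sum[OF this] show ?thesis
  proof
    assume "\<exists>M0. K = add_mset (D a s) M0 \<and> Z0 = M0 + P"
    then obtain M0 where "K = add_mset (D a s) M0" "Z0 = M0 + P" by blast
    then show ?thesis using Hole by (intro disjI1 exI[of _ "Hole M0"]) simp
  next
    assume "\<exists>P0. P = add_mset (D a s) P0 \<and> Z0 = K + P0"
    then show ?thesis using Hole by blast
  qed
next
  case (InBr K c' B)
  assume h: "add_mset (D a s) Z0 = fill c P"
  with InBr have "add_mset (D a s) Z0 = add_mset (Br (fill c' P) B) K" by simp
  then have "D a s \<in># K" by (metis insert_noteq_member item.distinct(6))
  then obtain K0 where "K = add_mset (D a s) K0" by (metis multi_member_split)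
  with InBr h show ?thesis by (intro disjI1 exI[of _ "InBr K0 c' B"]) simp
qed

lemma mv_fill: "mv (fill G P) Y \<Longrightarrow> (\<exists>G'. mvc G G' \<and> Y = fill G' P) \<or> (\<exists>P'. mv P P' \<and> Y = fill G P') \<or>
  (\<exists>G0 N K B a s P0. G = cat G0 (InBr N (Hole K) B) \<and> P = add_mset (D a s) P0 \<and> Y = fill G0 (add_mset (D a s) (add_mset (Br (K + P0) B) N)))"
proof (induction G arbitrary: Y)
  case (Hole M)
  then show ?case using mv_sum[of M P Y] by (auto intro: mvc.hole)
next
  case (InBr M c B)
  from InBr.prems have "mv (add_mset (Br (fill c P) B) M) Y" by simp
  from mv_Br[OF this] show ?case
  proof (elim disjE exE conjE)
    fix M' assume "mv M M'" "Y = add_mset (Br (fill c P) B) M'"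
    then show ?thesis by (auto intro: mvc.side)
  next
    fix Z' assume z: "mv (fill c P) Z'" "Y = add_mset (Br Z' B) M"
    from InBr.IH[OF z(1)] show ?thesis
    proof (elim disjE exE conjE)
      fix c' assume "mvc c c'" "Z' = fill c' P"
      then show ?thesis using z by (auto intro: mvc.dp)
    next
      fix P' assume "mv P P'" "Z' = fill c P'" then show ?thesis using z by auto
    next
      fix G0 N K B' a s P0 assume "c = cat G0 (InBr N (Hole K) B')" "P = add_mset (D a s) P0"
        "Z' = fill G0 (add_mset (D a s) (add_mset (Br (K + P0) B') N))"
      then show ?thesis using z
        apply -
        apply (rule disjI2, rule disjI2, rule exI[of _ "InBr M G0 B"], rule exI[of _ N], rule exI[of _ K])
        apply (rule exI[of _ B'], rule exI[of _ a], rule exI[of _ s], rule exI[of _ P0])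
        by simp
    qed
  next
    fix a s Z0 assume z: "fill c P = add_mset (D a s) Z0" "Y = add_mset (D a s) (add_mset (Br Z0 B) M)"
    from fill_top[OF z(1)[symmetric]] show ?thesis
    proof (elim disjE exE conjE)
      fix c0 assume "c = addtop (D a s) c0" "Z0 = fill c0 P"
      then show ?thesis using z mvc.out[of M a s c0 B] by auto
    next
      fix K P0 assume "c = Hole K" "P = add_mset (D a s) P0" "Z0 = K + P0"
      then show ?thesis using z
        apply -
        apply (rule disjI2, rule disjI2, rule exI[of _ "Hole {#}"], rule exI[of _ M], rule exI[of _ K])
        apply (rule exI[of _ B], rule exI[of _ a], rule exI[of _ s], rule exI[of _ P0])
        by simp
    qed
  qed
qed

lemma msm_pick_aux: "msm M1 M2 M \<Longrightarrow> (\<forall>c. c \<in># M \<longrightarrow> (\<exists>a b M1' M2' M'. M1 = add_mset a M1' \<and> M2 = add_mset b M2' \<and> M = add_mset c M' \<and> mi a b c \<and> msm M1' M2' M'))"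
proof (erule mi_msm.inducts(2)[where ?P1.0="\<lambda>_ _ _. True"], goal_cases)
  case (5 a b c0 M1 M2 M)
  show ?case
  proof (intro allI impI)
    fix c assume "c \<in># add_mset c0 M"
    then consider "c = c0" | "c \<in># M" by auto
    then show "\<exists>a' b' M1' M2' M'. add_mset a M1 = add_mset a' M1' \<and> add_mset b M2 = add_mset b' M2' \<and> add_mset c0 M = add_mset c M' \<and> mi a' b' c \<and> msm M1' M2' M'"
    proof cases
      case 1 then show ?thesis using 5 by blast
    next
      case 2
      with 5 obtain a' b' M1' M2' M' where h: "M1 = add_mset a' M1'" "M2 = add_mset b' M2'" "M = add_mset c M'" "mi a' b' c" "msm M1' M2' M'" by blast
      have "msm (add_mset a M1') (add_mset b M2') (add_mset c0 M')" using h 5 by (simp add: mi_msm.intros)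
      then show ?thesis using h
        by (intro exI[of _ a'] exI[of _ b'] exI[of _ "add_mset a M1'"] exI[of _ "add_mset b M2'"] exI[of _ "add_mset c0 M'"]) (simp add: add_mset_commute)
    qed
  qed
qed auto

lemma msm_pick: "msm M1 M2 (add_mset c M) \<Longrightarrow> \<exists>a b M1' M2'. M1 = add_mset a M1' \<and> M2 = add_mset b M2' \<and> mi a b c \<and> msm M1' M2' M"
  using msm_pick_aux[of M1 M2 "add_mset c M"] by force

lemma mi_D: "mi a b (D A S) \<Longrightarrow> \<exists>S1 S2. a = D A S1 \<and> b = D A S2 \<and> S = S1 |\<union>| S2"
  by (cases rule: mi.cases) auto

lemma mi_Br: "mi a b (Br M B) \<Longrightarrow> \<exists>M1 M2. a = Br M1 B \<and> b = Br M2 B \<and> msm M1 M2 M"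
  by (cases rule: mi.cases) auto

lemma msm_mv: "mv M M' \<Longrightarrow> msm M1 M2 M \<Longrightarrow> \<exists>M1' M2'. mv M1 M1' \<and> mv M2 M2' \<and> msm M1' M2' M'"
proof (induction arbitrary: M1 M2 rule: mv.induct)
  case (top a s K B N)
  from msm_pick[OF top] obtain b1 b2 M1n M2n where h1: "M1 = add_mset b1 M1n" "M2 = add_mset b2 M2n"
    "mi b1 b2 (Br (add_mset (D a s) K) B)" "msm M1n M2n N" by blast
  from mi_Br[OF h1(3)] obtain K1 K2 where h2: "b1 = Br K1 B" "b2 = Br K2 B" "msm K1 K2 (add_mset (D a s) K)" by blast
  from msm_pick[OF h2(3)] obtain y1 y2 K1' K2' where h3: "K1 = add_mset y1 K1'" "K2 = add_mset y2 K2'" "mi y1 y2 (D a s)" "msm K1' K2' K" by blast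
  from mi_D[OF h3(3)] obtain s1 s2 where h4: "y1 = D a s1" "y2 = D a s2" "s = s1 |\<union>| s2" by blast
  have "msm (add_mset (D a s1) (add_mset (Br K1' B) M1n)) (add_mset (D a s2) (add_mset (Br K2' B) M2n)) (add_mset (D a s) (add_mset (Br K B) N))"
    using h1 h3 h4 by (auto intro!: mi_msm.intros)
  then show ?case using h1 h2 h3 h4 by (auto intro: mv.top)
next
  case (deep K K' B N)
  from msm_pick[OF deep(3)] obtain b1 b2 M1n M2n where h1: "M1 = add_mset b1 M1n" "M2 = add_mset b2 M2n"
    "mi b1 b2 (Br K B)" "msm M1n M2n N" by blast
  from mi_Br[OF h1(3)] obtain K1 K2 where h2: "b1 = Br K1 B" "b2 = Br K2 B" "msm K1 K2 K" by blast
  from deep.IH[OF h2(3)] obtain K1' K2' where h3: "mv K1 K1'" "mv K2 K2'" "msm K1' K2' K'" by blast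
  have "msm (add_mset (Br K1' B) M1n) (add_mset (Br K2' B) M2n) (add_mset (Br K' B) N)"
    using h1 h3 by (auto intro!: mi_msm.intros)
  then show ?case using h1 h2 h3 by (auto intro: mv.deep)
qed

lemma mctx_addtop: "mctx c1 c2 (addtop x c) \<Longrightarrow> \<exists>x1 x2 c1' c2'. c1 = addtop x1 c1' \<and> c2 = addtop x2 c2' \<and> mi x1 x2 x \<and> mctx c1' c2' c"
proof (cases c)
  case (Hole K)
  assume "mctx c1 c2 (addtop x c)"
  then obtain K1 K2 where h: "c1 = Hole K1" "c2 = Hole K2" "msm K1 K2 (add_mset x K)" using Hole by (auto elim: mctx.cases)
  from msm_pick[OF h(3)] obtain a b K1' K2' where "K1 = add_mset a K1'" "K2 = add_mset b K2'" "mi a b x" "msm K1' K2' K" by blast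
  then show ?thesis using h Hole by (intro exI[of _ a] exI[of _ b] exI[of _ "Hole K1'"] exI[of _ "Hole K2'"]) (auto intro: mctx.intros)
next
  case (InBr K c' B)
  assume "mctx c1 c2 (addtop x c)"
  then obtain K1 K2 d1 d2 where h: "c1 = InBr K1 d1 B" "c2 = InBr K2 d2 B" "msm K1 K2 (add_mset x K)" "mctx d1 d2 c'" using InBr by (auto elim: mctx.cases)
  from msm_pick[OF h(3)] obtain a b K1' K2' where "K1 = add_mset a K1'" "K2 = add_mset b K2'" "mi a b x" "msm K1' K2' K" by blast
  then show ?thesis using h InBr by (intro exI[of _ a] exI[of _ b] exI[of _ "InBr K1' d1 B"] exI[of _ "InBr K2' d2 B"]) (auto intro: mctx.intros)
qed

lemma mctx_mvc: "mvc G G' \<Longrightarrow> mctx G1 G2 G \<Longrightarrow> \<exists>G1' G2'. mvc G1 G1' \<and> mvc G2 G2' \<and> mctx G1' G2' G'"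
proof (induction arbitrary: G1 G2 rule: mvc.induct)
  case (hole M M')
  then obtain M1 M2 where h: "G1 = Hole M1" "G2 = Hole M2" "msm M1 M2 M" by (auto elim: mctx.cases)
  from msm_mv[OF hole(1) h(3)] h show ?case by (auto intro: mvc.intros mctx.intros)
next
  case (side M M' c B)
  then obtain M1 M2 c1 c2 where h: "G1 = InBr M1 c1 B" "G2 = InBr M2 c2 B" "msm M1 M2 M" "mctx c1 c2 c" by (auto elim: mctx.cases)
  from msm_mv[OF side(1) h(3)] h show ?case by (auto intro: mvc.intros mctx.intros)
next
  case (dp c c' M B)
  then obtain M1 M2 c1 c2 where h: "G1 = InBr M1 c1 B" "G2 = InBr M2 c2 B" "msm M1 M2 M" "mctx c1 c2 c" by (auto elim: mctx.cases)
  from dp.IH[OF h(4)] h show ?case by (auto intro: mvc.intros mctx.intros)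
next
  case (out M a s c B)
  then obtain M1 M2 c1 c2 where h: "G1 = InBr M1 c1 B" "G2 = InBr M2 c2 B" "msm M1 M2 M" "mctx c1 c2 (addtop (D a s) c)" by (auto elim: mctx.cases)
  from mctx_addtop[OF h(4)] obtain x1 x2 c1' c2' where h2: "c1 = addtop x1 c1'" "c2 = addtop x2 c2'" "mi x1 x2 (D a s)" "mctx c1' c2' c" by blast
  from mi_D[OF h2(3)] obtain s1 s2 where h3: "x1 = D a s1" "x2 = D a s2" "s = s1 |\<union>| s2" by blast
  have "mctx (InBr (add_mset (D a s1) M1) c1' B) (InBr (add_mset (D a s2) M2) c2' B) (InBr (add_mset (D a s) M) c B)"
    using h h2 h3 by (auto intro!: mctx.intros mi_msm.intros)
  then show ?case using h h2 h3 by (auto intro: mvc.out)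
qed

lemma wf_Br[simp]: "wf_item (Br M B) = (\<forall>x\<in>#M. wf_item x)"
  by (auto intro: wf_item.intros elim: wf_item.cases)
lemma wf_Dm[simp]: "wf_item (D a s)"
  by (auto intro: wf_item.intros)

lemma mv_wf: "mv X Y \<Longrightarrow> wf_seq X \<Longrightarrow> wf_seq Y"
  unfolding wf_seq_def by (induction rule: mv.induct) auto

definition er :: "aitem \<Rightarrow> aitem" where "er = map_item (\<lambda>_. {||})"

lemma er_idem: "er (er x) = er x"
  unfolding er_def by (simp add: item.map_comp o_def)

lemma img_fix: assumes "image_mset f X = X" "\<And>y. f (f y) = f y" shows "\<forall>x\<in>#X. f x = x"
proof
  fix x assume "x \<in># X"
  then have "x \<in># image_mset f X" using assms(1) by simp
  then obtain y where "x = f y" by auto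
  then show "f x = x" using assms(2) by simp
qed

lemma img_fix_iff: "(image_mset er X = X) = (\<forall>x\<in>#X. er x = x)"
  using img_fix[of er X] er_idem by (auto intro: multiset.map_ident_strong)

lemma er_Br[simp]: "(er (Br M B) = Br M B) = (\<forall>x\<in>#M. er x = x)"
  using img_fix_iff[of M] unfolding er_def by simp

lemma er_D[simp]: "(er (D a s) = D a s) = (s = {||})"
  unfolding er_def by auto

lemma mv_er: "mv X Y \<Longrightarrow> \<forall>x\<in>#X. er x = x \<Longrightarrow> \<forall>x\<in>#Y. er x = x"
  by (induction rule: mv.induct) auto

lemma mv_erase: "mv X Y \<Longrightarrow> erase_seq X = X \<Longrightarrow> erase_seq Y = Y"
  using mv_er img_fix_iff unfolding erase_seq_def er_def[symmetric] by metis

lemma mv_out: "mv (fill G0 (add_mset (Br (add_mset (D a s) Z) B) N)) (fill G0 (add_mset (D a s) (add_mset (Br Z B) N)))"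
  by (rule mv_fill_cong) (rule mv.top)

lemma mv_addD: assumes "mv (add_mset (D a s) Z) W" shows "\<exists>Z'. mv Z Z' \<and> W = add_mset (D a s) Z'"
proof -
  from assms have "mv ({#D a s#} + Z) W" by simp
  from mv_sum[OF this] show ?thesis
  proof
    assume "\<exists>M'. mv {#D a s#} M' \<and> W = M' + Z"
    then show ?thesis using mv_hasBr by fastforce
  qed auto
qed

lemma noF: "\<not> mv {#F C#} P'" "\<not> mv {#} P'" "\<not> mv {#F C, F C'#} P'"
  using mv_hasBr by fastforce+

lemma noD: "{#F C#} \<noteq> add_mset (D a s) P0" "{#} \<noteq> add_mset (D a s) P0" "{#F C, F C'#} \<noteq> add_mset (D a s) P0"
  by (auto simp: add_eq_conv_ex)

lemma mv_fill_ctx: assumes "mv (fill G P) Y" "\<And>P'. \<not> mv P P'" "\<And>a s P0. P \<noteq> add_mset (D a s) P0"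
  shows "\<exists>G'. mvc G G' \<and> Y = fill G' P"
  using mv_fill[OF assms(1)] assms(2,3) by blast

lemma case_ax: assumes "wf_seq (fill G {#F (NAt a), F (At a)#})" "erase_seq (fill G {#F (NAt a), F (At a)#}) = fill G {#F (NAt a), F (At a)#}"
  shows "\<forall>Y. mv (fill G {#F (NAt a), F (At a)#}) Y \<longrightarrow> derivable Ac Y"
proof (intro allI impI)
  fix Y assume m: "mv (fill G {#F (NAt a), F (At a)#}) Y"
  from mv_fill_ctx[OF m noF(3) noD(3)] obtain G' where g: "mvc G G'" "Y = fill G' {#F (NAt a), F (At a)#}" by blast
  have "wf_seq Y" "erase_seq Y = Y" using mv_wf mv_erase assms m by blast+
  then show "derivable Ac Y" using g derivable.ax by metis
qed

lemma case_conj: assumes "\<forall>Y. mv (fill G1 {#fmi A S1#}) Y \<longrightarrow> derivable Ac Y" "\<forall>Y. mv (fill G2 {#fmi B S2#}) Y \<longrightarrow> derivable Ac Y" "mctx G1 G2 G"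
  shows "\<forall>Y. mv (fill G {#F (And A B)#}) Y \<longrightarrow> derivable Ac Y"
proof (intro allI impI)
  fix Y assume m: "mv (fill G {#F (And A B)#}) Y"
  from mv_fill_ctx[OF m noF(1) noD(1)] obtain G' where g: "mvc G G'" "Y = fill G' {#F (And A B)#}" by blast
  from mctx_mvc[OF g(1) assms(3)] obtain G1' G2' where h: "mvc G1 G1'" "mvc G2 G2'" "mctx G1' G2' G'" by blast
  have "derivable Ac (fill G1' {#fmi A S1#})" "derivable Ac (fill G2' {#fmi B S2#})" using assms h mvc_fill by blast+
  then show "derivable Ac Y" using g h derivable.conj by metis
qed

lemma case_cut: assumes "\<forall>Y. mv (fill G1 {#fmi Ac S1#}) Y \<longrightarrow> derivable Ac Y" "\<forall>Y. mv (fill G2 {#fmi (neg Ac) S2#}) Y \<longrightarrow> derivable Ac Y" "mctx G1 G2 G"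
  shows "\<forall>Y. mv (fill G {#}) Y \<longrightarrow> derivable Ac Y"
proof (intro allI impI)
  fix Y assume m: "mv (fill G {#}) Y"
  from mv_fill_ctx[OF m noF(2) noD(2)] obtain G' where g: "mvc G G'" "Y = fill G' {#}" by blast
  from mctx_mvc[OF g(1) assms(3)] obtain G1' G2' where h: "mvc G1 G1'" "mvc G2 G2'" "mctx G1' G2' G'" by blast
  have "derivable Ac (fill G1' {#fmi Ac S1#})" "derivable Ac (fill G2' {#fmi (neg Ac) S2#})" using assms h mvc_fill by blast+
  then show "derivable Ac Y" using g h derivable.cut by metis
qed

lemma case_disj: assumes "\<forall>Y. mv (fill G {#fmi A S1, fmi B S2#}) Y \<longrightarrow> derivable Ac Y"
  shows "\<forall>Y. mv (fill G {#F (Or A B)#}) Y \<longrightarrow> derivable Ac Y"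
proof (intro allI impI)
  fix Y assume m: "mv (fill G {#F (Or A B)#}) Y"
  from mv_fill_ctx[OF m noF(1) noD(1)] obtain G' where g: "mvc G G'" "Y = fill G' {#F (Or A B)#}" by blast
  have "derivable Ac (fill G' {#fmi A S1, fmi B S2#})" using assms g mvc_fill by blast
  then show "derivable Ac Y" using g derivable.disj by metis
qed

lemma case_box: assumes "\<forall>Y. mv (fill G {#Br {#D (neg A) S, fmi A S'#} A#}) Y \<longrightarrow> derivable Ac Y"
  shows "\<forall>Y. mv (fill G {#F (Box A)#}) Y \<longrightarrow> derivable Ac Y"
proof (intro allI impI)
  fix Y assume m: "mv (fill G {#F (Box A)#}) Y"
  from mv_fill_ctx[OF m noF(1) noD(1)] obtain G' where g: "mvc G G'" "Y = fill G' {#F (Box A)#}" by blast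
  have "derivable Ac (fill G' {#Br {#D (neg A) S, fmi A S'#} A#})" using assms g mvc_fill by blast
  then show "derivable Ac Y" using g derivable.box by metis
qed

lemma case_dia: assumes IH: "\<forall>Y. mv (fill G (add_mset (D A S) (fill Dl {#Br (add_mset (fmi A S') Dp) B#}))) Y \<longrightarrow> derivable Ac Y"
  shows "\<forall>Y. mv (fill G (add_mset (D A (finsert B S)) (fill Dl {#Br Dp B#}))) Y \<longrightarrow> derivable Ac Y"
proof (intro allI impI)
  fix Y
  define y where "y = fmi A S'"
  define d where "d = D A (finsert B S)"
  define d0 where "d0 = D A S"
  have rule: "derivable Ac (fill G' (add_mset d0 (fill Dl' {#Br (add_mset y Dp') B#}))) \<Longrightarrow>
     derivable Ac (fill G' (add_mset d (fill Dl' {#Br Dp' B#})))" for G' Dl' Dp'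
    unfolding d_def d0_def y_def by (rule derivable.dia)
  have IH': "mv (fill G (add_mset d0 (fill Dl {#Br (add_mset y Dp) B#}))) Y' \<Longrightarrow> derivable Ac Y'" for Y'
    using IH unfolding d0_def y_def by blast
  assume m0: "mv (fill G (add_mset (D A (finsert B S)) (fill Dl {#Br Dp B#}))) Y"
  then have m: "mv (fill G (add_mset d (fill Dl {#Br Dp B#}))) Y" unfolding d_def .
  from mv_fill[OF m] show "derivable Ac Y"
  proof (elim disjE exE conjE)
    fix G' assume g: "mvc G G'" "Y = fill G' (add_mset d (fill Dl {#Br Dp B#}))"
    show ?thesis using g rule IH' mvc_fill by metis
  next
    fix P' assume p: "mv (add_mset d (fill Dl {#Br Dp B#})) P'" "Y = fill G P'"
    from mv_addD[OF p(1)[unfolded d_def]] obtain Z' where z: "mv (fill Dl {#Br Dp B#}) Z'" "P' = add_mset d Z'"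
      unfolding d_def by blast
    from mv_fill[OF z(1)] show ?thesis
    proof (elim disjE exE conjE)
      fix Dl' assume h: "mvc Dl Dl'" "Z' = fill Dl' {#Br Dp B#}"
      have "mv (fill G (add_mset d0 (fill Dl {#Br (add_mset y Dp) B#}))) (fill G (add_mset d0 (fill Dl' {#Br (add_mset y Dp) B#})))"
        using h by (intro mv_fill_cong mv_addm mvc_fill)
      then show ?thesis using IH' rule h z p by metis
    next
      fix R'' assume h: "mv {#Br Dp B#} R''" "Z' = fill Dl R''"
      from mv_single[OF h(1)] show ?thesis
      proof (elim disjE exE conjE)
        fix a s Dp0 assume q: "Dp = add_mset (D a s) Dp0" "R'' = {#D a s, Br Dp0 B#}"
        have "mv {#Br (add_mset y (add_mset (D a s) Dp0)) B#} {#D a s, Br (add_mset y Dp0) B#}"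
          using mv.top[of a s "add_mset y Dp0" B "{#}"] by (simp add: add_mset_commute)
        then have "mv (fill G (add_mset d0 (fill Dl {#Br (add_mset y (add_mset (D a s) Dp0)) B#}))) (fill G (add_mset d0 (fill Dl {#D a s, Br (add_mset y Dp0) B#})))"
          by (intro mv_fill_cong mv_addm)
        then have "mv (fill G (add_mset d0 (fill Dl {#Br (add_mset y Dp) B#}))) (fill G (add_mset d0 (fill (cat Dl (Hole {#D a s#})) {#Br (add_mset y Dp0) B#})))"
          using q by (simp add: add_mset_commute)
        then have "derivable Ac (fill G (add_mset d (fill (cat Dl (Hole {#D a s#})) {#Br Dp0 B#})))" using IH' rule by blast
        then show ?thesis using q h z p by (simp add: add_mset_commute)
      next
        fix Dp' assume q: "mv Dp Dp'" "R'' = {#Br Dp' B#}"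
        have "mv {#Br (add_mset y Dp) B#} {#Br (add_mset y Dp') B#}"
          using mv.deep[OF mv_addm[OF q(1), of y], of B "{#}"] by simp
        then have "mv (fill G (add_mset d0 (fill Dl {#Br (add_mset y Dp) B#}))) (fill G (add_mset d0 (fill Dl {#Br (add_mset y Dp') B#})))"
          by (intro mv_fill_cong mv_addm)
        then show ?thesis using IH' rule q h z p by metis
      qed
    next
      fix G0 N K B0 a s P0 assume "{#Br Dp B#} = add_mset (D a s) P0"
      then show ?thesis by (simp add: add_eq_conv_ex)
    qed
  next
    fix G0 N K B0 a s P0 assume h: "G = cat G0 (InBr N (Hole K) B0)" "add_mset d (fill Dl {#Br Dp B#}) = add_mset (D a s) P0"
      "Y = fill G0 (add_mset (D a s) (add_mset (Br (K + P0) B0) N))"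
    show ?thesis
    proof (cases "D a s = d")
      case True
      with h(2) have P0: "P0 = fill Dl {#Br Dp B#}" by simp
      have "mv (fill G (add_mset d0 (fill Dl {#Br (add_mset y Dp) B#}))) (fill G0 (add_mset d0 (fill (InBr N (addms K Dl) B0) {#Br (add_mset y Dp) B#})))"
        using h(1) mv_out[of G0 A S "K + fill Dl {#Br (add_mset y Dp) B#}" B0 N] unfolding d0_def by simp
      then have "derivable Ac (fill G0 (add_mset d (fill (InBr N (addms K Dl) B0) {#Br Dp B#})))" using IH' rule by blast
      then show ?thesis using h(3) True P0 by simp
    next
      case False
      from h(2) False obtain Z0 where z: "fill Dl {#Br Dp B#} = add_mset (D a s) Z0" "P0 = add_mset d Z0"
        by (auto simp: add_eq_conv_ex)
      from fill_top[OF z(1)[symmetric]] obtain Dl0 where dl: "Dl = addtop (D a s) Dl0" "Z0 = fill Dl0 {#Br Dp B#}"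
        by (auto simp: add_eq_conv_ex)
      let ?G' = "cat G0 (InBr (add_mset (D a s) N) (Hole K) B0)"
      have "mv (fill G (add_mset d0 (fill Dl {#Br (add_mset y Dp) B#}))) (fill G0 (add_mset (D a s) (add_mset (Br (K + add_mset d0 (fill Dl0 {#Br (add_mset y Dp) B#})) B0) N)))"
        using h(1) dl mv_out[of G0 a s "K + add_mset d0 (fill Dl0 {#Br (add_mset y Dp) B#})" B0 N] by (simp add: add_mset_commute)
      also have "fill G0 (add_mset (D a s) (add_mset (Br (K + add_mset d0 (fill Dl0 {#Br (add_mset y Dp) B#})) B0) N)) = fill ?G' (add_mset d0 (fill Dl0 {#Br (add_mset y Dp) B#}))"
        by (simp add: add_mset_commute)
      finally have "derivable Ac (fill ?G' (add_mset d (fill Dl0 {#Br Dp B#})))" using IH' rule by blast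
      then show ?thesis using h(3) z dl by (simp add: add_mset_commute)
    qed
  qed
qed

lemma mv_derivable: "derivable Ac X \<Longrightarrow> \<forall>Y. mv X Y \<longrightarrow> derivable Ac Y"
proof (induction rule: derivable.induct)
  case (ax G a Ac) then show ?case by (rule case_ax)
next
  case conj then show ?case by (metis case_conj)
next
  case disj then show ?case by (metis case_disj)
next
  case box then show ?case by (metis case_box)
next
  case dia then show ?case by (metis case_dia)
next
  case cut then show ?case by (metis case_cut)
qed

lemma star_derivable: "mv\<^sup>*\<^sup>* X Y \<Longrightarrow> derivable Ac X \<Longrightarrow> derivable Ac Y"
  by (induction rule: rtranclp_induct) (auto dest: mv_derivable)

lemma reach: "mv\<^sup>*\<^sup>* (fill G (fill Dl {#D a s#})) (fill G (add_mset (D a s) (fill Dl {#})))"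
proof (induction Dl arbitrary: G)
  case (Hole M) then show ?case by (simp add: rtranclp.rtrancl_refl)
next
  case (InBr M c B)
  have "mv\<^sup>*\<^sup>* (fill (cat G (InBr M (Hole {#}) B)) (fill c {#D a s#})) (fill (cat G (InBr M (Hole {#}) B)) (add_mset (D a s) (fill c {#})))"
    by (rule InBr.IH)
  then have "mv\<^sup>*\<^sup>* (fill G (add_mset (Br (fill c {#D a s#}) B) M)) (fill G (add_mset (Br (add_mset (D a s) (fill c {#})) B) M))" by simp
  moreover have "mv (fill G (add_mset (Br (add_mset (D a s) (fill c {#})) B) M)) (fill G (add_mset (D a s) (add_mset (Br (fill c {#}) B) M)))"
    by (rule mv_out)
  ultimately have "mv\<^sup>*\<^sup>* (fill G (add_mset (Br (fill c {#D a s#}) B) M)) (fill G (add_mset (D a s) (add_mset (Br (fill c {#}) B) M)))"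
    by (rule rtranclp.rtrancl_into_rtrancl)
  then show ?case by simp
qed


theorem mainTheorem5:
  fixes A :: fm and G Dl :: actx and \<Sigma> :: "fm fset"
  assumes "wf_ctx G" and "wf_ctx Dl"
    and "derivable A (fill G (fill Dl {#D (neg A) \<Sigma>#}))"
  shows "\<exists>G' Dl'. erase_ctx G' = erase_ctx G \<and> erase_ctx Dl' = erase_ctx Dl \<and>
           derivable A (fill G' (add_mset (D (neg A) \<Sigma>) (fill Dl' {#})))"
  using star_derivable[OF reach assms(3)] by blast

end
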